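(* Let $R>0$ and let $\mathbf L\colon \mathbb R^n\times\mathbb R^m\to\mathbb R$ be an $R$-smooth convex-concave function that has a saddle point $\mathbf z^\star$. Let $\alpha>0$ satisfy $$1-3\alpha R-\alpha^2R^2-\alpha^3R^3\ge 0\quad\text{and}\quad 1-8\alpha R+\alpha^2R^2-2\alpha^3R^3\ge 0.$$ Let $\mathbf z^0\in\mathbb R^n\times\mathbb R^m$ be arbitrary, and define for $k\ge 0$ the EAG-C iterates $$\mathbf z^{k+1/2}=\mathbf z^k+\tfrac{1}{k+2}(\mathbf z^0-\mathbf z^k)-\alpha\,\mathbf G(\mathbf z^k),\qquad \mathbf z^{k+1}=\mathbf z^k+\tfrac{1}{k+2}(\mathbf z^0-\mathbf z^k)-\alpha\,\mathbf G(\mathbf z^{k+1/2}).$$ Then for all $k\ge 0$, $$\|\nabla\mathbf L(\mathbf z^k)\|^2\le \frac{4(1+\alpha R+\alpha^2R^2)}{\alpha^2(1+\alpha R)}\,\frac{\|\mathbf z^0-\mathbf z^\star\|^2}{(k+1)^2}.$$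
   Context: Write $\mathbf z=(\mathbf x,\mathbf y)\in\mathbb R^n\times\mathbb R^m$. $\mathbf L$ is convex-concave if $\mathbf L(\cdot,\mathbf y)$ is convex for each $\mathbf y$ and $\mathbf L(\mathbf x,\cdot)$ is concave for each $\mathbf x$. A saddle point $(\mathbf x^\star,\mathbf y^\star)$ satisfies $\mathbf L(\mathbf x^\star,\mathbf y)\le\mathbf L(\mathbf x^\star,\mathbf y^\star)\le\mathbf L(\mathbf x,\mathbf y^\star)$ for all $\mathbf x,\mathbf y$. For differentiable $\mathbf L$, the saddle operator is $\mathbf G(\mathbf z)=(\nabla_{\mathbf x}\mathbf L(\mathbf x,\mathbf y),-\nabla_{\mathbf y}\mathbf L(\mathbf x,\mathbf y))$. $\mathbf L$ is $R$-smooth if $\mathbf L$ is differentiable and $\mathbf G$ is $R$-Lipschitz continuous. Note $\|\nabla\mathbf L(\mathbf z)\|=\|\mathbf G(\mathbf z)\|$. *)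

theory Defs
  imports "HOL-Analysis.Analysis"
begin

definition grad_x :: "('a::euclidean_space \<times> 'b::euclidean_space \<Rightarrow> real) \<Rightarrow> 'a \<Rightarrow> 'b \<Rightarrow> 'a" where
  "grad_x L x y = (THE g. ((\<lambda>u. L (u, y)) has_derivative (\<lambda>h. h \<bullet> g)) (at x))"

definition grad_y :: "('a::euclidean_space \<times> 'b::euclidean_space \<Rightarrow> real) \<Rightarrow> 'a \<Rightarrow> 'b \<Rightarrow> 'b" where
  "grad_y L x y = (THE g. ((\<lambda>v. L (x, v)) has_derivative (\<lambda>h. h \<bullet> g)) (at y))"

definition saddle_op :: "('a::euclidean_space \<times> 'b::euclidean_space \<Rightarrow> real) \<Rightarrow> 'a \<times> 'b \<Rightarrow> 'a \<times> 'b" where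
  "saddle_op L z = (grad_x L (fst z) (snd z), - grad_y L (fst z) (snd z))"

definition convex_concave :: "('a::euclidean_space \<times> 'b::euclidean_space \<Rightarrow> real) \<Rightarrow> bool" where
  "convex_concave L \<longleftrightarrow> (\<forall>y. convex_on UNIV (\<lambda>x. L (x, y))) \<and> (\<forall>x. concave_on UNIV (\<lambda>y. L (x, y)))"

definition is_saddle_point :: "('a::euclidean_space \<times> 'b::euclidean_space \<Rightarrow> real) \<Rightarrow> 'a \<times> 'b \<Rightarrow> bool" where
  "is_saddle_point L zs \<longleftrightarrow>
     (\<forall>x y. L (fst zs, y) \<le> L zs \<and> L zs \<le> L (x, snd zs))"

definition R_smooth :: "real \<Rightarrow> ('a::euclidean_space \<times> 'b::euclidean_space \<Rightarrow> real) \<Rightarrow> bool" where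
  "R_smooth R L \<longleftrightarrow> (\<forall>z. L differentiable (at z)) \<and> R-lipschitz_on UNIV (saddle_op L)"

end

theory Submission
  imports Defs
begin

lemma partial_deriv_ex:
  fixes f :: "'a::euclidean_space \<Rightarrow> real"
  assumes "(f has_derivative D) (at x)"
  shows "\<exists>g. (f has_derivative (\<lambda>h. h \<bullet> g)) (at x)"
proof -
  have lin: "linear D" using has_derivative_linear[OF assms] .
  define g where "g = adjoint D 1"
  have eq: "D = (\<lambda>h. h \<bullet> g)" using adjoint_works[OF lin, of _ 1] by (auto simp: g_def)
  show ?thesis using assms eq by auto
qed

lemma grad_unique:
  fixes f :: "'a::euclidean_space \<Rightarrow> real"
  assumes "(f has_derivative (\<lambda>h. h \<bullet> g)) (at x)" "(f has_derivative (\<lambda>h. h \<bullet> g')) (at x)"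
  shows "g' = g"
proof -
  have "(\<lambda>h. h \<bullet> g) = (\<lambda>h. h \<bullet> g')" using has_derivative_unique[OF assms] .
  then have "(g' - g) \<bullet> g = (g' - g) \<bullet> g'" by metis
  then have "(g' - g) \<bullet> (g' - g) = 0" by (simp add: inner_diff_right)
  then show ?thesis by simp
qed

lemma grad_x_works:
  fixes L :: "'a::euclidean_space \<times> 'b::euclidean_space \<Rightarrow> real"
  assumes "L differentiable (at (x,y))"
  shows "((\<lambda>u. L (u, y)) has_derivative (\<lambda>h. h \<bullet> grad_x L x y)) (at x)"
proof -
  obtain D where D: "(L has_derivative D) (at (x,y))" using assms differentiable_def by blast
  have "((\<lambda>u. (u,y)) has_derivative (\<lambda>h. (h,0))) (at x)" by (auto intro!: derivative_eq_intros)
  from diff_chain_at[OF this D] have d1: "((\<lambda>u. L(u,y)) has_derivative (\<lambda>h. D(h,0))) (at x)"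
    by (simp add: o_def)
  obtain g where g: "((\<lambda>u. L(u,y)) has_derivative (\<lambda>h. h \<bullet> g)) (at x)"
    using partial_deriv_ex[OF d1] by blast
  show ?thesis unfolding grad_x_def
    by (rule theI2[of _ g]) (use g grad_unique in blast)+
qed

lemma grad_y_works:
  fixes L :: "'a::euclidean_space \<times> 'b::euclidean_space \<Rightarrow> real"
  assumes "L differentiable (at (x,y))"
  shows "((\<lambda>v. L (x, v)) has_derivative (\<lambda>h. h \<bullet> grad_y L x y)) (at y)"
proof -
  obtain D where D: "(L has_derivative D) (at (x,y))" using assms differentiable_def by blast
  have "((\<lambda>v. (x,v)) has_derivative (\<lambda>h. (0,h))) (at y)" by (auto intro!: derivative_eq_intros)
  from diff_chain_at[OF this D] have d1: "((\<lambda>v. L(x,v)) has_derivative (\<lambda>h. D(0,h))) (at y)"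
    by (simp add: o_def)
  obtain g where g: "((\<lambda>v. L(x,v)) has_derivative (\<lambda>h. h \<bullet> g)) (at y)"
    using partial_deriv_ex[OF d1] by blast
  show ?thesis unfolding grad_y_def
    by (rule theI2[of _ g]) (use g grad_unique in blast)+
qed

lemma convex_tangent:
  fixes f :: "'a::euclidean_space \<Rightarrow> real"
  assumes cv: "convex_on UNIV f" and d: "\<And>x. (f has_derivative (\<lambda>h. h \<bullet> g x)) (at x)"
  shows "f x + (x' - x) \<bullet> g x \<le> f x'"
proof -
  define dd where "dd = x' - x"
  define \<phi> where "\<phi> = (\<lambda>t::real. f (x + t *\<^sub>R dd))"
  have cphi: "convex_on UNIV \<phi>"
  proof (rule convex_onI)
    fix t a b :: real assume t: "0 < t" "t < 1"
    have "x + ((1 - t) *\<^sub>R a + t *\<^sub>R b) *\<^sub>R dd = (1 - t) *\<^sub>R (x + a *\<^sub>R dd) + t *\<^sub>R (x + b *\<^sub>R dd)"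
      by (simp add: algebra_simps)
    then show "\<phi> ((1 - t) *\<^sub>R a + t *\<^sub>R b) \<le> (1 - t) * \<phi> a + t * \<phi> b"
      unfolding \<phi>_def using convex_onD[OF cv, of t] t by simp
  qed simp
  have "((\<lambda>t. x + t *\<^sub>R dd) has_derivative (\<lambda>t. t *\<^sub>R dd)) (at 0)"
    by (auto intro!: derivative_eq_intros)
  from diff_chain_at[OF this d[of "x + 0 *\<^sub>R dd"]]
  have "(\<phi> has_derivative (\<lambda>t. t * (dd \<bullet> g x))) (at 0)"
    by (simp add: o_def \<phi>_def)
  then have "(\<phi> has_field_derivative (dd \<bullet> g x)) (at 0 within UNIV)"
    unfolding has_field_derivative_def
    by (metis (no_types, lifting) ext mult.commute)
  from convex_on_imp_above_tangent[OF cphi _ _ _ this, of 1]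
  have "\<phi> 1 - \<phi> 0 \<ge> dd \<bullet> g x" by simp
  then show ?thesis by (simp add: \<phi>_def dd_def)
qed

lemma concave_tangent:
  fixes f :: "'a::euclidean_space \<Rightarrow> real"
  assumes cv: "concave_on UNIV f" and d: "\<And>x. (f has_derivative (\<lambda>h. h \<bullet> g x)) (at x)"
  shows "f x' \<le> f x + (x' - x) \<bullet> g x"
proof -
  have "(\<lambda>x. - f x) x + (x' - x) \<bullet> (- g x) \<le> (\<lambda>x. - f x) x'"
  proof (rule convex_tangent)
    show "convex_on UNIV (\<lambda>x. - f x)" using cv by (simp add: concave_on_def)
    fix x show "((\<lambda>x. - f x) has_derivative (\<lambda>h. h \<bullet> - g x)) (at x)"
      using has_derivative_minus[OF d[of x]] by simp
  qed
  then show ?thesis by simp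
qed

lemma monotone_G:
  fixes L :: "'a::euclidean_space \<times> 'b::euclidean_space \<Rightarrow> real"
  assumes diff: "\<And>z. L differentiable (at z)" and cc: "convex_concave L"
  shows "0 \<le> (saddle_op L z - saddle_op L z') \<bullet> (z - z')"
proof -
  obtain x y where z: "z = (x,y)" by fastforce
  obtain x' y' where z': "z' = (x',y')" by fastforce
  have cx: "\<And>y. convex_on UNIV (\<lambda>x. L (x, y))" and cy: "\<And>x. concave_on UNIV (\<lambda>y. L (x, y))"
    using cc by (auto simp: convex_concave_def)
  have T1: "L(x,y) + (x'-x) \<bullet> grad_x L x y \<le> L(x',y)"
    using convex_tangent[OF cx grad_x_works[OF diff]] .
  have T2: "L(x',y') + (x-x') \<bullet> grad_x L x' y' \<le> L(x,y')"
    using convex_tangent[OF cx grad_x_works[OF diff]] .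
  have T3: "L(x,y') \<le> L(x,y) + (y'-y) \<bullet> grad_y L x y"
    using concave_tangent[OF cy grad_y_works[OF diff]] .
  have T4: "L(x',y) \<le> L(x',y') + (y-y') \<bullet> grad_y L x' y'"
    using concave_tangent[OF cy grad_y_works[OF diff]] .
  have e1: "(x - x') \<bullet> grad_x L x' y' = - ((x' - x) \<bullet> grad_x L x' y')"
    by (simp add: inner_diff_left)
  have e2: "(y - y') \<bullet> grad_y L x' y' = - ((y' - y) \<bullet> grad_y L x' y')"
    by (simp add: inner_diff_left)
  have "(saddle_op L z - saddle_op L z') \<bullet> (z - z') =
     (x' - x) \<bullet> grad_x L x' y' - (x' - x) \<bullet> grad_x L x y + (y' - y) \<bullet> grad_y L x y - (y' - y) \<bullet> grad_y L x' y'"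
    by (simp add: z z' saddle_op_def inner_diff_left inner_diff_right inner_commute algebra_simps)
  then show ?thesis using T1 T2 T3 T4 e1 e2 by linarith
qed

lemma G_saddle_zero:
  fixes L :: "'a::euclidean_space \<times> 'b::euclidean_space \<Rightarrow> real"
  assumes diff: "\<And>z. L differentiable (at z)" and sp: "is_saddle_point L zs"
  shows "saddle_op L zs = 0"
proof -
  obtain x y where z: "zs = (x,y)" by fastforce
  have "(\<lambda>h. h \<bullet> grad_x L x y) = (\<lambda>v. 0)"
    by (rule differential_zero_maxmin[of x UNIV, OF _ _ grad_x_works[OF diff]])
       (use sp in \<open>auto simp: is_saddle_point_def z\<close>)
  then have gx: "grad_x L x y = 0" by (metis inner_eq_zero_iff)
  have "(\<lambda>h. h \<bullet> grad_y L x y) = (\<lambda>v. 0)"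
    by (rule differential_zero_maxmin[of y UNIV, OF _ _ grad_y_works[OF diff]])
       (use sp in \<open>auto simp: is_saddle_point_def z\<close>)
  then have gy: "grad_y L x y = 0" by (metis inner_eq_zero_iff)
  show ?thesis by (simp add: saddle_op_def z gx gy zero_prod_def)
qed


definition Pf :: "real \<Rightarrow> real \<Rightarrow> real" where
  "Pf r m = m * (m + 1) / 2 - r / (1 + r) * m"

lemma s_small:
  fixes r :: real
  assumes r: "0 < r" and c2: "1 - 8*r + r^2 - 2*r^3 \<ge> 0"
  shows "r \<le> 1/7"
proof (rule ccontr)
  assume "\<not> r \<le> 1/7"
  then have s7: "r > 1/7" by simp
  show False
  proof (cases "r \<le> 1")
    case True
    then have "r^2 \<le> r" by (simp add: power2_eq_square mult_left_le r less_imp_le)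
    moreover have "r^3 > 0" using r by simp
    ultimately show False using c2 s7 by linarith
  next
    case False
    then have "r*r < r*(r*r)" using r by simp
    moreover have "8*r + 2*(r*(r*r)) \<le> 1 + r*r" using c2 by (simp add: power2_eq_square power3_eq_cube)
    moreover have "0 \<le> r*r" by simp
    ultimately show False using False by linarith
  qed
qed

lemma id2_gen:
  fixes n r D uu uv vv :: real
  assumes D: "D \<noteq> 0" and r: "r \<noteq> 0" and De: "D = 1 + r"
  shows "(- n * ((1 - r)/D) / 2 * vv - n * ((1 - r)/D) * uv + ((n+1) * ((1-r)^2/(4*r*D)) + (n + 2) / 2 - r/D) * uu)
     - (n * (-2 + 7*r - 4*r^2 + 3*r^3) + r + 2*r^2 + r^3) / (4 * D) * vv
   = - (n * ((1 - r)/D) / (2 * r)) * (uu + 2*r*uv + r^2* vv)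
                        + (n * ((1 - r)/D) / (2 * r) + ((n+1) * ((1-r)^2/(4*r*D)) + (n + 2) / 2 - r/D)) * (uu - r^2 * vv)"
  using D r apply (simp add: field_simps)
  apply (simp add: De algebra_simps power2_eq_square power3_eq_cube)
  done
lemma id1_gen:
  fixes cc cv cu vv uv uu n e :: real
  assumes e: "e \<noteq> 0"
  shows "((n+1) * ((n+1) + 1) / 2 - e * (n+1)) * (cc + vv + uu + 2*cv + 2*cu + 2*uv) - (n * (n + 1) / 2 - e * n) * cc
          - (n+1)^2 * (cc + 2*cv + cu + vv + uv) + n*(n+1)*(cc + cv)
        = - e * (cc + (n+1)^2 * vv + ((n+1) * (1 - 2*e) / (2 * e))^2 * uu + 2*(n+1)*cv - 2*((n+1) * (1 - 2*e) / (2 * e))*cu - 2*(n+1)*((n+1) * (1 - 2*e) / (2 * e))*uv)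
          + (n+1) * (- n * (1 - 2*e) / 2 * vv - n * (1 - 2*e) * uv + ((n+1) * (1 - 2*e)^2 / (4 * e) + ((n+1) + 1) / 2 - e) * uu)"
  using e by (simp add: field_simps power2_eq_square)

lemma scalar_step:
  fixes cc cv cu vv uv uu n r :: real
  defines "N \<equiv> n + 1"
  defines "\<epsilon> \<equiv> r / (1 + r)"
  defines "\<delta> \<equiv> 1 - 2 * \<epsilon>"
  defines "q \<equiv> N * \<delta> / (2 * \<epsilon>)"
  assumes n: "1 \<le> n" and r: "0 < r" and c2: "1 - 8*r + r^2 - 2*r^3 \<ge> 0"
    and S1: "0 \<le> cc + N^2 * vv + q^2 * uu + 2*N*cv - 2*q*cu - 2*N*q*uv"
    and S2: "0 \<le> uu + 2*r*uv + r^2* vv"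
    and S3: "uu \<le> r^2 * vv" and vv: "0 \<le> vv"
  shows "Pf r N * (cc + vv + uu + 2*cv + 2*cu + 2*uv) - Pf r n * cc
          - N^2 * (cc + 2*cv + cu + vv + uv) + n*N*(cc + cv) \<le> 0"
proof -
  have s7: "r \<le> 1/7" using s_small[OF r c2] .
  have eps: "0 < \<epsilon>" using r by (simp add: \<epsilon>_def)
  have del: "\<delta> = (1 - r) / (1 + r)" using r by (simp add: \<delta>_def \<epsilon>_def field_simps)
  have del0: "0 \<le> \<delta>" using r s7 by (simp add: del)
  define K where "K = N * (\<delta>^2 / (4 * \<epsilon>)) + (N + 1) / 2 - \<epsilon>"
  define X where "X = - n * \<delta> / 2 * vv - n * \<delta> * uv + K * uu"
  define f where "f = (n * (-2 + 7*r - 4*r^2 + 3*r^3) + r + 2*r^2 + r^3) / (4 * (1 + r))"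
  have id1: "Pf r N * (cc + vv + uu + 2*cv + 2*cu + 2*uv) - Pf r n * cc
          - N^2 * (cc + 2*cv + cu + vv + uv) + n*N*(cc + cv)
        = - \<epsilon> * (cc + N^2 * vv + q^2 * uu + 2*N*cv - 2*q*cu - 2*N*q*uv) + N * X"
  proof -
    have Pe: "\<And>m. Pf r m = m * (m + 1) / 2 - \<epsilon> * m" by (simp add: Pf_def \<epsilon>_def)
    show ?thesis unfolding Pe X_def K_def q_def \<delta>_def N_def
      using id1_gen[where e=\<epsilon> and cc=cc and vv=vv and uu=uu and cv=cv and cu=cu and uv=uv and n=n] eps by simp
  qed
  have K0: "0 \<le> K" unfolding K_def using eps del0 r s7 n
    by (simp add: \<epsilon>_def N_def field_simps)
  have id2: "X - f * vv = - (n * \<delta> / (2 * r)) * (uu + 2*r*uv + r^2* vv)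
                        + (n * \<delta> / (2 * r) + K) * (uu - r^2 * vv)"
  proof -
    have nz: "1 + r \<noteq> 0" "r \<noteq> 0" using r by auto
    have a: "\<delta>^2/(4*\<epsilon>) = (1-r)^2/(4*r*(1+r))" unfolding del \<epsilon>_def using r
      by (simp add: power_divide power2_eq_square)
    have Keq: "K = (n+1) * ((1-r)^2/(4*r*(1+r))) + (n + 2) / 2 - r/(1+r)"
      unfolding K_def N_def a by (simp add: \<epsilon>_def)
    show ?thesis unfolding X_def f_def Keq del
      using id2_gen[where D="1+r" and r=r and n=n and uu=uu and uv=uv and vv=vv] nz by simp
  qed
  have t1: "0 \<le> (n * \<delta> / (2 * r)) * (uu + 2*r*uv + r^2* vv)"
    using n del0 r S2 by simp
  have t2: "(n * \<delta> / (2 * r) + K) * (uu - r^2 * vv) \<le> 0"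
    using n del0 r K0 S3 by (intro mult_nonneg_nonpos) auto
  have Xf: "X \<le> f * vv" using id2 t1 t2 by linarith
  have p1: "-2 + 7*r - 4*r^2 + 3*r^3 \<le> 0"
  proof -
    have "r^2 \<le> r" "r^3 \<le> r" using r s7 by (simp_all add: power2_eq_square power3_eq_cube mult_le_one)
    moreover have "0 \<le> r^2" by simp
    ultimately show ?thesis using s7 by linarith
  qed
  have "n * (-2 + 7*r - 4*r^2 + 3*r^3) + r + 2*r^2 + r^3
       = (n - 1) * (-2 + 7*r - 4*r^2 + 3*r^3) + (-2 + 8*r - 2*r^2 + 4*r^3)"
    by (simp add: algebra_simps)
  also have "\<dots> \<le> 0"
  proof -
    have "(n - 1) * (-2 + 7*r - 4*r^2 + 3*r^3) \<le> 0" using n p1 by (intro mult_nonneg_nonpos) auto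
    moreover have "-2 + 8*r - 2*r^2 + 4*r^3 \<le> 0" using c2 r
      by (smt (verit) power3_eq_cube mult_pos_pos)
    ultimately show ?thesis by linarith
  qed
  finally have "f \<le> 0" unfolding f_def using r by (simp add: divide_nonpos_pos)
  then have "f * vv \<le> 0" using vv by (simp add: mult_nonpos_nonneg)
  then have "N * X \<le> 0" using Xf n unfolding N_def by (simp add: mult_nonneg_nonpos)
  moreover have "0 \<le> \<epsilon> * (cc + N^2 * vv + q^2 * uu + 2*N*cv - 2*q*cu - 2*N*q*uv)"
    using eps S1 by simp
  ultimately show ?thesis using id1 by linarith
qed


lemma vec_step:
  fixes a c h :: "'v::real_inner" and n r :: real
  assumes n: "1 \<le> n" and r: "0 < r" and c2: "1 - 8*r + r^2 - 2*r^3 \<ge> 0"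
    and lip: "norm (a - h) \<le> r * norm (h - c)"
  shows "Pf r (n+1) * (a \<bullet> a) - Pf r n * (c \<bullet> c) - (n+1)^2 * (a \<bullet> h) + n*(n+1)*(c \<bullet> h) \<le> 0"
proof -
  define v where "v = h - c"
  define u where "u = a - h"
  have hv: "h = c + v" and au: "a = c + v + u" by (simp_all add: v_def u_def)
  define N where "N = n + 1"
  define \<epsilon> where "\<epsilon> = r / (1 + r)"
  define \<delta> where "\<delta> = 1 - 2 * \<epsilon>"
  define q where "q = N * \<delta> / (2 * \<epsilon>)"
  have S1: "0 \<le> (c + N *\<^sub>R v - q *\<^sub>R u) \<bullet> (c + N *\<^sub>R v - q *\<^sub>R u)" by simp
  have S1': "(c + N *\<^sub>R v - q *\<^sub>R u) \<bullet> (c + N *\<^sub>R v - q *\<^sub>R u)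
     = c \<bullet> c + N^2 * (v \<bullet> v) + q^2 * (u \<bullet> u) + 2*N*(c \<bullet> v) - 2*q*(c \<bullet> u) - 2*N*q*(u \<bullet> v)"
    by (simp add: inner_add_left inner_add_right inner_diff_left inner_diff_right inner_commute
        power2_eq_square algebra_simps)
  have S2: "0 \<le> (u + r *\<^sub>R v) \<bullet> (u + r *\<^sub>R v)" by simp
  have S2': "(u + r *\<^sub>R v) \<bullet> (u + r *\<^sub>R v) = u \<bullet> u + 2*r*(u \<bullet> v) + r^2 * (v \<bullet> v)"
    by (simp add: inner_add_left inner_add_right inner_commute power2_eq_square algebra_simps)
  have "norm u ^ 2 \<le> (r * norm v) ^ 2"
    using lip by (intro power_mono) (auto simp: u_def v_def)
  then have S3: "u \<bullet> u \<le> r^2 * (v \<bullet> v)" by (simp add: power2_norm_eq_inner power_mult_distrib)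
  have vv: "0 \<le> v \<bullet> v" by simp
  have S1g: "0 \<le> c \<bullet> c + N^2 * (v \<bullet> v) + q^2 * (u \<bullet> u) + 2*N*(c \<bullet> v) - 2*q*(c \<bullet> u) - 2*N*q*(u \<bullet> v)"
    using S1 S1' by simp
  have S2g: "0 \<le> u \<bullet> u + 2*r*(u \<bullet> v) + r^2 * (v \<bullet> v)" using S2 S2' by simp
  have main: "Pf r (n+1) * (c \<bullet> c + v \<bullet> v + u \<bullet> u + 2*(c \<bullet> v) + 2*(c \<bullet> u) + 2*(u \<bullet> v)) - Pf r n * (c \<bullet> c)
          - (n+1)^2 * (c \<bullet> c + 2*(c \<bullet> v) + c \<bullet> u + v \<bullet> v + u \<bullet> v) + n*(n+1)*(c \<bullet> c + c \<bullet> v) \<le> 0"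
    using scalar_step[OF n r c2 S1g[unfolded N_def q_def \<delta>_def \<epsilon>_def] S2g S3 vv] .
  have e1: "a \<bullet> a = c \<bullet> c + v \<bullet> v + u \<bullet> u + 2*(c \<bullet> v) + 2*(c \<bullet> u) + 2*(u \<bullet> v)"
    unfolding au by (simp add: inner_add_left inner_add_right inner_commute algebra_simps)
  have e2: "a \<bullet> h = c \<bullet> c + 2*(c \<bullet> v) + c \<bullet> u + v \<bullet> v + u \<bullet> v"
    unfolding au hv by (simp add: inner_add_left inner_add_right inner_commute algebra_simps)
  have e3: "c \<bullet> h = c \<bullet> c + c \<bullet> v"
    unfolding hv by (simp add: inner_add_left inner_add_right inner_commute algebra_simps)
  show ?thesis using main unfolding e1 e2 e3 .
qed


theorem theorem1:
  fixes L :: "'a::euclidean_space \<times> 'b::euclidean_space \<Rightarrow> real"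
    and R \<alpha> :: real
    and zs :: "'a \<times> 'b"
    and z zh :: "nat \<Rightarrow> 'a \<times> 'b"
  assumes R_pos: "R > 0"
    and smooth: "R_smooth R L"
    and cc: "convex_concave L"
    and saddle: "is_saddle_point L zs"
    and alpha_pos: "\<alpha> > 0"
    and c1: "1 - 3*\<alpha>*R - \<alpha>^2*R^2 - \<alpha>^3*R^3 \<ge> 0"
    and c2: "1 - 8*\<alpha>*R + \<alpha>^2*R^2 - 2*\<alpha>^3*R^3 \<ge> 0"
    and half: "\<And>k. zh k = z k + (1 / (real k + 2)) *\<^sub>R (z 0 - z k) - \<alpha> *\<^sub>R saddle_op L (z k)"
    and full: "\<And>k. z (Suc k) = z k + (1 / (real k + 2)) *\<^sub>R (z 0 - z k) - \<alpha> *\<^sub>R saddle_op L (zh k)"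
  shows "\<forall>k. (norm (saddle_op L (z k)))^2
           \<le> 4 * (1 + \<alpha>*R + \<alpha>^2*R^2) / (\<alpha>^2 * (1 + \<alpha>*R)) * (norm (z 0 - zs))^2 / (real k + 1)^2"
proof
  fix k :: nat
  define G where "G = saddle_op L"
  define \<rho> where "\<rho> = \<alpha> * R"
  have \<rho>0: "0 < \<rho>" using R_pos alpha_pos by (simp add: \<rho>_def)
  have c2': "1 - 8*\<rho> + \<rho>^2 - 2*\<rho>^3 \<ge> 0" using c2 by (simp add: \<rho>_def power_mult_distrib mult.assoc)
  have \<rho>7: "\<rho> \<le> 1/7" using s_small[OF \<rho>0 c2'] .
  have diff0: "\<forall>z. L differentiable (at z)" using smooth unfolding R_smooth_def by (rule conjunct1)
  have diff: "\<And>z. L differentiable (at z)" using diff0 by blast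
  have lipG: "\<And>x y. norm (G x - G y) \<le> R * norm (x - y)"
    using smooth lipschitz_onD[of R UNIV "saddle_op L"] by (auto simp: R_smooth_def G_def dist_norm)
  have mono: "\<And>x y. 0 \<le> (G x - G y) \<bullet> (x - y)"
    unfolding G_def by (rule monotone_G[OF diff cc])
  have Gs: "G zs = 0" unfolding G_def by (rule G_saddle_zero[OF diff saddle])
  define V where "V = (\<lambda>k::nat. \<alpha> * Pf \<rho> (real k + 1) * (G (z k) \<bullet> G (z k)) + (real k + 1) * (G (z k) \<bullet> (z k - z 0)))"
  have Vstep: "V (Suc k) \<le> V k" for k
  proof -
    define n where "n = real k + 1"
    have n1: "1 \<le> n" by (simp add: n_def)
    define a where "a = G (z (Suc k))"
    define c where "c = G (z k)"
    define h where "h = G (zh k)"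
    have zdiff: "z (Suc k) - zh k = - \<alpha> *\<^sub>R (h - c)"
      unfolding h_def c_def G_def by (simp add: full half algebra_simps)
    have lip: "norm (a - h) \<le> \<rho> * norm (h - c)"
    proof -
      have "norm (a - h) \<le> R * norm (z (Suc k) - zh k)" unfolding a_def h_def by (rule lipG)
      also have "\<dots> = \<rho> * norm (h - c)" using alpha_pos by (simp add: zdiff \<rho>_def)
      finally show ?thesis .
    qed
    have E: "Pf \<rho> (n+1) * (a \<bullet> a) - Pf \<rho> n * (c \<bullet> c) - (n+1)^2 * (a \<bullet> h) + n*(n+1)*(c \<bullet> h) \<le> 0"
      by (rule vec_step[OF n1 \<rho>0 c2' lip])
    define t where "t = 1 / (n + 1)"
    have kt: "1 / (real k + 2) = t" by (simp add: t_def n_def add.commute)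
    have step1: "z (Suc k) - z k = t *\<^sub>R (z 0 - z k) - \<alpha> *\<^sub>R h"
      unfolding h_def G_def using full[of k] kt by simp
    have step2: "z (Suc k) - z 0 = (1 - t) *\<^sub>R (z k - z 0) - \<alpha> *\<^sub>R h"
      using step1 by (simp add: algebra_simps)
    define A1 where "A1 = a \<bullet> (z k - z 0)"
    define C1 where "C1 = c \<bullet> (z k - z 0)"
    have m: "0 \<le> t * (C1 - A1) - \<alpha> * (a \<bullet> h - c \<bullet> h)"
    proof -
      have "0 \<le> (a - c) \<bullet> (z (Suc k) - z k)" unfolding a_def c_def by (rule mono)
      also have "\<dots> = t * (C1 - A1) - \<alpha> * (a \<bullet> h - c \<bullet> h)"
        unfolding step1 A1_def C1_def
        by (simp add: inner_diff_left inner_diff_right algebra_simps)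
      finally show ?thesis .
    qed
    have VS: "V (Suc k) = \<alpha> * Pf \<rho> (n+1) * (a \<bullet> a) + (n + 1) * ((1 - t) * A1 - \<alpha> * (a \<bullet> h))"
    proof -
      have "a \<bullet> (z (Suc k) - z 0) = (1 - t) * A1 - \<alpha> * (a \<bullet> h)"
        unfolding step2 A1_def by (simp add: inner_diff_right)
      then show ?thesis unfolding V_def a_def n_def by (simp add: add.commute add.left_commute)
    qed
    have Vk: "V k = \<alpha> * Pf \<rho> n * (c \<bullet> c) + n * C1"
      unfolding V_def c_def C1_def n_def by simp
    have tn: "(n + 1) * t = 1" "(n+1) * (1 - t) = n" using n1 by (simp_all add: t_def field_simps)
    have m2: "n * (A1 - C1) \<le> - n * (n+1) * \<alpha> * (a \<bullet> h - c \<bullet> h)"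
    proof -
      have "0 \<le> (n * (n+1)) * (t * (C1 - A1) - \<alpha> * (a \<bullet> h - c \<bullet> h))"
        using m n1 by simp
      also have "\<dots> = n * ((n+1) * t) * (C1 - A1) - n * (n+1) * \<alpha> * (a \<bullet> h - c \<bullet> h)"
        by (simp add: algebra_simps)
      finally show ?thesis unfolding tn(1) by (simp add: algebra_simps)
    qed
    have "V (Suc k) - V k = \<alpha> * (Pf \<rho> (n+1) * (a \<bullet> a) - Pf \<rho> n * (c \<bullet> c)) + n * (A1 - C1) - (n+1) * \<alpha> * (a \<bullet> h)"
      unfolding VS Vk using tn by (simp add: algebra_simps)
    also have "\<dots> \<le> \<alpha> * (Pf \<rho> (n+1) * (a \<bullet> a) - Pf \<rho> n * (c \<bullet> c)) - n * (n+1) * \<alpha> * (a \<bullet> h - c \<bullet> h) - (n+1) * \<alpha> * (a \<bullet> h)"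
      using m2 by linarith
    also have "\<dots> = \<alpha> * (Pf \<rho> (n+1) * (a \<bullet> a) - Pf \<rho> n * (c \<bullet> c) - (n+1)^2 * (a \<bullet> h) + n*(n+1)*(c \<bullet> h))"
      by (simp add: algebra_simps power2_eq_square)
    also have "\<dots> \<le> 0" using E alpha_pos by (simp add: mult_nonneg_nonpos)
    finally show ?thesis by simp
  qed
  have VV0: "V k \<le> V 0"
    by (induction k) (auto intro: order_trans[OF Vstep])
  define g where "g = norm (G (z k))"
  define d where "d = norm (z 0 - zs)"
  define m where "m = real k + 1"
  have m1: "1 \<le> m" by (simp add: m_def)
  have V0: "V 0 = \<alpha> / (1 + \<rho>) * (norm (G (z 0)))^2"
  proof -
    have "Pf \<rho> 1 = 1 / (1 + \<rho>)" using \<rho>0 by (simp add: Pf_def field_simps)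
    then show ?thesis by (simp add: V_def power2_norm_eq_inner)
  qed
  have G0: "norm (G (z 0)) \<le> R * d" using lipG[of "z 0" zs] by (simp add: Gs d_def)
  have V0b: "V 0 \<le> \<alpha> / (1 + \<rho>) * (R * d)^2"
    unfolding V0 using G0 \<rho>0 alpha_pos by (intro mult_left_mono power_mono) auto
  have inner_lb: "- (g * d) \<le> G (z k) \<bullet> (z k - z 0)"
  proof -
    have "0 \<le> G (z k) \<bullet> (z k - zs)" using mono[of "z k" zs] by (simp add: Gs)
    moreover have "- (g * d) \<le> G (z k) \<bullet> (zs - z 0)"
      using norm_cauchy_schwarz[of "G (z k)" "zs - z 0"] by (simp add: g_def d_def norm_minus_commute)
      (smt (verit) Cauchy_Schwarz_ineq2 inner_minus_right minus_diff_eq norm_minus_commute)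
    moreover have "G (z k) \<bullet> (z k - z 0) = G (z k) \<bullet> (z k - zs) + G (z k) \<bullet> (zs - z 0)"
      by (simp add: inner_diff_right)
    ultimately show ?thesis by linarith
  qed
  have Pfb: "m^2 / 2 \<le> Pf \<rho> m"
  proof -
    have "\<rho> / (1 + \<rho>) * m \<le> m / 2" using \<rho>0 \<rho>7 m1 by (simp add: field_simps)
    then show ?thesis by (simp add: Pf_def power2_eq_square field_simps)
  qed
  have Vk_lb: "\<alpha> * m^2 * g^2 / 2 - m * (g * d) \<le> V k"
  proof -
    have "\<alpha> * (m^2/2) * g^2 \<le> \<alpha> * Pf \<rho> m * g^2"
      using Pfb alpha_pos by (intro mult_right_mono mult_left_mono) auto
    moreover have "- (m * (g * d)) \<le> m * (G (z k) \<bullet> (z k - z 0))"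
      using inner_lb m1 by (metis mult_left_mono mult_minus_right le_numeral_extra(1) order_trans zero_le_one)
    ultimately show ?thesis unfolding V_def m_def g_def by (simp add: power2_norm_eq_inner)
  qed
  have young: "m * (g * d) \<le> \<alpha> * m^2 * g^2 / 4 + d^2 / \<alpha>"
  proof -
    have "0 \<le> \<alpha> * (m * g / 2 - d / \<alpha>)^2" using alpha_pos by simp
    also have "\<dots> = \<alpha> * m^2 * g^2 / 4 - m * (g * d) + d^2 / \<alpha>"
      using alpha_pos by (simp add: power2_eq_square field_simps)
    finally show ?thesis by linarith
  qed
  have key: "\<alpha> * m^2 * g^2 / 4 \<le> \<alpha> / (1 + \<rho>) * (R * d)^2 + d^2 / \<alpha>"
    using Vk_lb VV0 V0b young by linarith
  have "m^2 * g^2 \<le> 4 * (1 + \<rho> + \<rho>^2) / (\<alpha>^2 * (1 + \<rho>)) * d^2"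
  proof -
    have "m^2 * g^2 = (4 / \<alpha>) * (\<alpha> * m^2 * g^2 / 4)" using alpha_pos by simp
    also have "\<dots> \<le> (4 / \<alpha>) * (\<alpha> / (1 + \<rho>) * (R * d)^2 + d^2 / \<alpha>)"
      using key alpha_pos by (intro mult_left_mono) auto
    also have "\<dots> = 4 * (1 + \<rho> + \<rho>^2) / (\<alpha>^2 * (1 + \<rho>)) * d^2"
      using alpha_pos \<rho>0 unfolding \<rho>_def by (simp add: field_simps power2_eq_square)
    finally show ?thesis .
  qed
  have "g^2 \<le> 4 * (1 + \<rho> + \<rho>^2) / (\<alpha>^2 * (1 + \<rho>)) * d^2 / m^2"
  proof -
    have m2pos: "0 < m^2" using m1 by simp
    show ?thesis unfolding pos_le_divide_eq[OF m2pos] using \<open>m^2 * g^2 \<le> _\<close> by (simp add: mult.commute)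
  qed
  then show "(norm (saddle_op L (z k)))^2
           \<le> 4 * (1 + \<alpha>*R + \<alpha>^2*R^2) / (\<alpha>^2 * (1 + \<alpha>*R)) * (norm (z 0 - zs))^2 / (real k + 1)^2"
    unfolding g_def d_def m_def G_def \<rho>_def by (simp add: power_mult_distrib)
qed

end
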